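(* For any $n$-node graph $G$ and any $r\in\mathbb{N}$, the existence of an $r$-cycle in $G$ can be detected within $\lfloor (r-1)/2\rfloor+\mathcal{O}(\log n/\log\log n)$ rounds of the $\mathsf{HYBRID}$ model.
   Context: Distributed setting: $n$ nodes with unique IDs in $\{1,\dots,n\}$; local communication graph $G$ undirected; each node initially knows only its neighbors' IDs; synchronous rounds, unlimited local computation. In the $\mathsf{HYBRID}$ model, in every round each node may send a message of arbitrary size to each neighbor (local mode) and may additionally send and receive $\mathcal{O}(\log n)$-bit messages to/from up to $\mathcal{O}(\log n)$ arbitrary nodes (global mode); excess messages are dropped arbitrarily. An $r$-cycle is a cycle of length $r$; detection means every node learns whether $G$ contains an $r$-cycle. *)

theory Defs
  imports Main "HOL-Library.Landau_Symbols"
begin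

definition simple_graph :: "nat \<Rightarrow> (nat \<Rightarrow> nat \<Rightarrow> bool) \<Rightarrow> bool" where
  "simple_graph n E \<longleftrightarrow>
     (\<forall>u v. E u v \<longrightarrow> E v u) \<and> (\<forall>u. \<not> E u u) \<and>
     (\<forall>u v. E u v \<longrightarrow> u \<in> {1..n} \<and> v \<in> {1..n})"

definition has_cycle :: "nat \<Rightarrow> (nat \<Rightarrow> nat \<Rightarrow> bool) \<Rightarrow> nat \<Rightarrow> bool" where
  "has_cycle n E r \<longleftrightarrow>
     (\<exists>vs. length vs = r \<and> 3 \<le> r \<and> distinct vs \<and> set vs \<subseteq> {1..n} \<and>
           (\<forall>i<r. E (vs ! i) (vs ! ((i + 1) mod r))))"

text \<open>Local states and local messages are encoded
  as natural numbers (unbounded size). Global messages are bit strings.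
  a_init n id nbrs: initial state of node id (knows n, its ID, its neighbours' IDs).
  a_lsend s w: local message sent to neighbour w.
  a_gsend s: list of global messages (target ID, bits).
  a_step s L G: new state from local messages L (L u = Some m iff u is a neighbour)
    and the set G of delivered global messages (sender ID, bits).
  a_out s: current output (None = undecided).\<close>
record hybrid_alg =
  a_init  :: "nat \<Rightarrow> nat \<Rightarrow> nat set \<Rightarrow> nat"
  a_lsend :: "nat \<Rightarrow> nat \<Rightarrow> nat"
  a_gsend :: "nat \<Rightarrow> (nat \<times> bool list) list"
  a_step  :: "nat \<Rightarrow> (nat \<Rightarrow> nat option) \<Rightarrow> (nat \<times> bool list) set \<Rightarrow> nat"
  a_out   :: "nat \<Rightarrow> bool option"

definition cap :: "nat \<Rightarrow> nat \<Rightarrow> nat" where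
  "cap c n = c * (nat \<lceil>log 2 (real n)\<rceil> + 1)"

definition sent :: "hybrid_alg \<Rightarrow> nat \<Rightarrow> (nat \<Rightarrow> nat) \<Rightarrow> nat \<Rightarrow> (nat \<times> bool list) set" where
  "sent A n s v = {(u, m). u \<in> {1..n} \<and> (v, m) \<in> set (a_gsend A (s u))}"

text \<open>Adversary dropping excess global messages arbitrarily: adv t v S is the set of
  messages delivered to v in round t out of the set S sent to v.\<close>
definition valid_adv :: "nat \<Rightarrow> (nat \<Rightarrow> nat \<Rightarrow> (nat \<times> bool list) set \<Rightarrow> (nat \<times> bool list) set) \<Rightarrow> bool" where
  "valid_adv k adv \<longleftrightarrow>
     (\<forall>t v S. finite S \<longrightarrow> adv t v S \<subseteq> S \<and>
        (card S \<le> k \<longrightarrow> adv t v S = S) \<and> (k < card S \<longrightarrow> card (adv t v S) = k))"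

primrec run :: "hybrid_alg \<Rightarrow> nat \<Rightarrow> (nat \<Rightarrow> nat \<Rightarrow> bool) \<Rightarrow>
    (nat \<Rightarrow> nat \<Rightarrow> (nat \<times> bool list) set \<Rightarrow> (nat \<times> bool list) set) \<Rightarrow> nat \<Rightarrow> nat \<Rightarrow> nat" where
  "run A n E adv 0 = (\<lambda>v. a_init A n v {u. E v u})"
| "run A n E adv (Suc t) =
     (let s = run A n E adv t in
      (\<lambda>v. a_step A (s v) (\<lambda>u. if E u v then Some (a_lsend A (s u) v) else None)
                 (adv t v (sent A n s v))))"

end

theory Submission imports Defs "HOL-Library.Countable" "HOL-Real_Asymp.Real_Asymp" begin

type_synonym ast = "nat \<times> nat \<times> nat \<times> (nat \<times> nat) list \<times> bool"

definition dd :: "nat \<Rightarrow> nat" where "dd n = nat \<lceil>log 2 (real n)\<rceil> + 1"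
definition DD :: "nat \<Rightarrow> nat" where
  "DD n = (if n < 4 then n else nat \<lceil>ln (real n) / ln (ln (real n))\<rceil>)"

definition cycK :: "nat \<Rightarrow> (nat \<times> nat) set \<Rightarrow> bool" where
  "cycK r R \<longleftrightarrow> (\<exists>vs. length vs = r \<and> 3 \<le> r \<and> distinct vs \<and> (\<forall>i<r. (vs!i, vs!((i+1) mod r)) \<in> R))"

definition init0 :: "nat \<Rightarrow> nat \<Rightarrow> nat \<Rightarrow> nat set \<Rightarrow> ast" where
  "init0 r n v N = (let K = concat (map (\<lambda>u. [(v,u),(u,v)]) (sorted_list_of_set N)) in (v, n, 0, K, cycK r (set K)))"

definition gsend0 :: "nat \<Rightarrow> ast \<Rightarrow> (nat \<times> bool list) list" where
  "gsend0 r s = (case s of (v, n, c, K, acc) \<Rightarrow>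
     (let x = v - 1; d = dd n; D = DD n; T0 = (r-1) div 2 in
      if \<not> acc \<or> c < T0 then [] else
      if c - T0 < D then (if d^(c - T0) dvd x then [(d^(c - T0 + 1) * (x div d^(c - T0 + 1)) + 1, [])] else [])
      else if c - T0 < 2*D then
        (if d^(2*D - 1 - (c - T0) + 1) dvd x then map (\<lambda>i. (x + i*d^(2*D - 1 - (c - T0)) + 1, [])) [1..<d] else [])
      else []))"

definition step0 :: "nat \<Rightarrow> ast \<Rightarrow> (nat \<Rightarrow> (nat\<times>nat) list option) \<Rightarrow> (nat \<times> bool list) set \<Rightarrow> ast" where
  "step0 r s L G = (case s of (v, n, c, K, acc) \<Rightarrow>
     (let K' = K @ concat (map (\<lambda>u. case L u of Some k \<Rightarrow> k | None \<Rightarrow> []) [1..<n+1]) in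
      (v, n, Suc c, K', acc \<or> cycK r (set K') \<or> G \<noteq> {})))"

definition Kof :: "ast \<Rightarrow> (nat \<times> nat) list" where "Kof s = fst (snd (snd (snd s)))"
definition accof :: "ast \<Rightarrow> bool" where "accof s = snd (snd (snd (snd s)))"

definition alg :: "nat \<Rightarrow> hybrid_alg" where
  "alg r = \<lparr>a_init = (\<lambda>n v N. to_nat (init0 r n v N)),
           a_lsend = (\<lambda>s w. to_nat (Kof (from_nat s))),
           a_gsend = (\<lambda>s. gsend0 r (from_nat s)),
           a_step = (\<lambda>s L G. to_nat (step0 r (from_nat s) (\<lambda>u. map_option from_nat (L u)) G)),
           a_out = (\<lambda>s. Some (accof (from_nat s)))\<rparr>"

lemma dd_pos: "dd n \<ge> 1" by (simp add: dd_def)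

lemma dd_DD: "n \<le> dd n ^ DD n"
proof (cases "n < 4")
  case True
  show ?thesis
  proof (cases "n \<le> 1")
    case True then show ?thesis using dd_pos[of n] by (cases n) (auto simp: DD_def)
  next
    case False
    then have "log 2 (real n) \<ge> 1" by simp
    then have "dd n \<ge> 2" unfolding dd_def by linarith
    then have "2 ^ n \<le> dd n ^ n" by (simp add: power_mono)
    moreover have "n < 2 ^ n" by (rule less_exp)
    ultimately have "n \<le> dd n ^ n" by linarith
    then show ?thesis using True by (simp add: DD_def)
  qed
next
  case False
  let ?L = "ln (real n)"
  have n3: "real n \<ge> 4" using False by simp
  have L1: "?L > 1"
  proof -
    have "exp 1 < (4::real)" using exp_le by linarith
    then have "exp 1 < real n" using n3 by linarith
    moreover have "0 < real n" using n3 by linarith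
    ultimately show ?thesis using ln_less_cancel_iff[of "exp 1" "real n"] by simp
  qed
  have LL: "ln ?L > 0" using L1 by simp
  have "log 2 (real n) \<ge> ?L"
  proof -
    have l2: "ln 2 \<le> (1::real)" "0 < ln (2::real)" using ln_2_less_1 by simp_all
    have "log 2 (real n) = ?L / ln 2" by (simp add: log_def)
    also have "\<dots> \<ge> ?L" using L1 l2
      by (simp add: le_divide_eq)
    finally show ?thesis .
  qed
  then have dL: "real (dd n) \<ge> ?L" unfolding dd_def by linarith
  have DDe: "DD n = nat \<lceil>?L / ln ?L\<rceil>" using False by (simp add: DD_def)
  have Dge: "real (DD n) \<ge> ?L / ln ?L" unfolding DDe by linarith
  have "real n = exp (ln ?L * (?L / ln ?L))" using LL n3 by simp
  also have "\<dots> = ?L powr (?L / ln ?L)" using L1 by (simp add: powr_def)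
  also have "\<dots> \<le> ?L powr (real (DD n))" using L1 Dge by (intro powr_mono) auto
  also have "\<dots> = ?L ^ DD n" using L1 by (simp add: powr_realpow)
  also have "\<dots> \<le> real (dd n) ^ DD n" using L1 dL by (intro power_mono) auto
  finally have "real n \<le> real (dd n ^ DD n)" by simp
  then show ?thesis by linarith
qed

lemma aux_abs: "(a::real) \<le> y + 1 \<Longrightarrow> 0 \<le> y \<Longrightarrow> 0 \<le> a \<Longrightarrow> \<bar>2 * a\<bar> \<le> \<bar>2 * (y + 1)\<bar>"
  by simp

lemma DD_bigo: "(\<lambda>n. real (2 * DD n)) \<in> O(\<lambda>n. ln (real n) / ln (ln (real n)))"
proof -
  have "eventually (\<lambda>n. norm (real (2 * DD n)) \<le> norm (2 * (ln (real n) / ln (ln (real n)) + 1))) at_top"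
  proof (rule eventually_at_top_linorderI[of 4])
    fix n :: nat assume "n \<ge> 4"
    then have "DD n = nat \<lceil>ln (real n) / ln (ln (real n))\<rceil>" by (simp add: DD_def)
    moreover have "ln (real n) / ln (ln (real n)) \<ge> 0"
    proof -
      have "real n \<ge> 4" using \<open>n \<ge> 4\<close> by simp
      have "ln (real n) \<ge> 1"
      proof -
        have "exp 1 < (4::real)" using exp_le by linarith
        then have "exp 1 < real n" using \<open>real n \<ge> 4\<close> by linarith
        moreover have "0 < n" using \<open>n \<ge> 4\<close> by simp
        ultimately have "1 < ln (real n)" using ln_less_cancel_iff[of "exp 1" "real n"] by simp
        then show ?thesis by simp
      qed
      then show ?thesis by simp
    qed
    ultimately have "real (DD n) \<le> ln (real n) / ln (ln (real n)) + 1"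
      proof -
      have "real (nat \<lceil>ln (real n) / ln (ln (real n))\<rceil>) = of_int \<lceil>ln (real n) / ln (ln (real n))\<rceil>"
        using \<open>ln (real n) / ln (ln (real n)) \<ge> 0\<close> by (intro of_nat_nat) simp
      also have "\<dots> \<le> ln (real n) / ln (ln (real n)) + 1" by (rule of_int_ceiling_le_add_one)
      finally show ?thesis using \<open>DD n = _\<close> by simp
    qed
    then show "norm (real (2 * DD n)) \<le> norm (2 * (ln (real n) / ln (ln (real n)) + 1))"
      using \<open>ln (real n) / ln (ln (real n)) \<ge> 0\<close> by (simp only: real_norm_def of_nat_mult of_nat_numeral) (rule aux_abs, simp_all)
  qed
  then have "(\<lambda>n. real (2 * DD n)) \<in> O(\<lambda>n::nat. 2 * (ln (real n) / ln (ln (real n)) + 1))"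
    by (rule landau_o.big_mono)
  also have "(\<lambda>n::nat. 2 * (ln (real n) / ln (ln (real n)) + 1)) \<in> O(\<lambda>n. ln (real n) / ln (ln (real n)))"
    by real_asymp
  finally show ?thesis .
qed




lemma cap_dd: "cap 1 n = dd n" by (simp add: cap_def dd_def)

lemma A1:
  fixes d x g :: nat assumes "d > 0" "d^g dvd x"
  shows "x = d^(g+1) * (x div d^(g+1)) + ((x div d^g) mod d) * d^g"
proof -
  have "x = d^g * (x div d^g)" using assms(2) by simp
  also have "x div d^g = d * (x div d^g div d) + (x div d^g) mod d" by simp
  also have "x div d^g div d = x div (d^g * d)" by (rule div_mult2_eq[symmetric])
  also have "d^g * d = d^(g+1)" by simp
  finally show ?thesis by (simp add: algebra_simps)
qed

lemma A2:
  fixes d x e i :: nat assumes "d > 0" "d^(e+1) dvd x" "i < d"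
  shows "(x + i * d^e) div d^(e+1) = x div d^(e+1)"
proof -
  obtain q where q: "x = d^(e+1) * q" using assms(2) by blast
  have "i * d^e < d^(e+1)" using assms(1,3) by simp
  then have "(i * d^e) div d^(e+1) = 0" by simp
  then show ?thesis unfolding q using assms(1) by simp
qed

locale setting =
  fixes r n :: nat and E :: "nat \<Rightarrow> nat \<Rightarrow> bool"
    and adv :: "nat \<Rightarrow> nat \<Rightarrow> (nat \<times> bool list) set \<Rightarrow> (nat \<times> bool list) set"
  assumes sg: "simple_graph n E" and va: "valid_adv (dd n) adv"
begin

definition S :: "nat \<Rightarrow> nat \<Rightarrow> ast" where "S t v = from_nat (run (alg r) n E adv t v)"
definition K :: "nat \<Rightarrow> nat \<Rightarrow> (nat \<times> nat) list" where "K t v = Kof (S t v)"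
definition acc :: "nat \<Rightarrow> nat \<Rightarrow> bool" where "acc t v = accof (S t v)"
definition SE :: "nat \<Rightarrow> nat \<Rightarrow> (nat \<times> bool list) set" where
  "SE t v = {(u, m). u \<in> {1..n} \<and> (v, m) \<in> set (gsend0 r (S t u))}"

lemma Esym: "E u v \<Longrightarrow> E v u" using sg by (simp add: simple_graph_def)
lemma Erange: "E u v \<Longrightarrow> u \<in> {1..n} \<and> v \<in> {1..n}" using sg unfolding simple_graph_def by blast

lemma sent_eq: "sent (alg r) n (run (alg r) n E adv t) v = SE t v"
  by (simp add: sent_def SE_def alg_def S_def)

lemma gsend_eq: "a_gsend (alg r) (run (alg r) n E adv t u) = gsend0 r (S t u)"
  by (simp add: alg_def S_def)

lemma out_eq: "a_out (alg r) (run (alg r) n E adv t u) = Some (acc t u)"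
  by (simp add: alg_def S_def acc_def)

lemma S_0: "S 0 v = init0 r n v {u. E v u}"
  by (simp add: S_def alg_def)

lemma alg_simps: "a_step (alg r) s L G = to_nat (step0 r (from_nat s) (\<lambda>u. map_option from_nat (L u)) G)"
  "a_lsend (alg r) s w = to_nat (Kof (from_nat s))"
  by (simp_all add: alg_def)

lemma S_Suc: "S (Suc t) v = step0 r (S t v) (\<lambda>u. if E u v then Some (K t u) else None)
    (adv t v (SE t v))"
proof -
  have e: "(\<lambda>u. map_option from_nat (if E u v then Some (a_lsend (alg r) (run (alg r) n E adv t u) v) else None))
     = (\<lambda>u. if E u v then Some (K t u) else None)"
    by (rule ext) (simp add: alg_simps K_def S_def)
  show ?thesis
    unfolding S_def[of "Suc t"] run.simps Let_def alg_simps(1) from_nat_to_nat e sent_eq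
    by (simp add: S_def)
qed

lemma shape: "S t v = (v, n, t, K t v, acc t v)"
proof (induction t arbitrary: v)
  case 0 then show ?case by (simp add: S_0 init0_def Let_def K_def acc_def Kof_def accof_def)
next
  case (Suc t)
  have "\<exists>K' a'. S (Suc t) v = (v, n, Suc t, K', a')"
    by (subst S_Suc, subst Suc[of v]) (simp add: step0_def Let_def)
  then obtain K' a' where "S (Suc t) v = (v, n, Suc t, K', a')" by blast
  then show ?case by (simp add: K_def acc_def Kof_def accof_def)
qed

lemma K_Suc: "set (K (Suc t) v) = set (K t v) \<union> (\<Union>u\<in>{u. E u v}. set (K t u))"
proof -
  have "K (Suc t) v = K t v @ concat (map (\<lambda>u. case (if E u v then Some (K t u) else None) of Some k \<Rightarrow> k | None \<Rightarrow> []) [1..<n+1])"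
    unfolding K_def[of "Suc t"] by (subst S_Suc, subst shape[of t v]) (simp add: step0_def Let_def Kof_def K_def)
  moreover have "set (concat (map (\<lambda>u. case (if E u v then Some (K t u) else None) of Some k \<Rightarrow> k | None \<Rightarrow> []) [1..<n+1]))
     = (\<Union>u\<in>{1..n}. if E u v then set (K t u) else {})"
    by (auto split: if_splits) force
  moreover have "(\<Union>u\<in>{1..n}. if E u v then set (K t u) else {}) = (\<Union>u\<in>{u. E u v}. set (K t u))"
    using Erange by (auto split: if_splits) (metis IntI atLeastAtMost_iff mem_Collect_eq One_nat_def)
  ultimately show ?thesis by simp
qed

lemma acc_Suc: "acc (Suc t) v = (acc t v \<or> cycK r (set (K (Suc t) v)) \<or> adv t v (SE t v) \<noteq> {})"
proof -
  have "K (Suc t) v = K t v @ concat (map (\<lambda>u. case (if E u v then Some (K t u) else None) of Some k \<Rightarrow> k | None \<Rightarrow> []) [1..<n+1])"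
    unfolding K_def[of "Suc t"] by (subst S_Suc, subst shape[of t v]) (simp add: step0_def Let_def Kof_def K_def)
  then show ?thesis
    unfolding acc_def[of "Suc t"] by (subst S_Suc, subst shape[of t v]) (simp add: step0_def Let_def accof_def acc_def)
qed

lemma K_0: "set (K 0 v) = {(a, b). E a b \<and> (a = v \<or> b = v)}"
proof -
  have fin: "finite {u. E v u}" using Erange by (metis (no_types, lifting) finite_atLeastAtMost finite_subset mem_Collect_eq subsetI)
  have "K 0 v = concat (map (\<lambda>u. [(v,u),(u,v)]) (sorted_list_of_set {u. E v u}))"
    unfolding K_def by (simp add: S_0 init0_def Let_def Kof_def)
  then show ?thesis using fin Esym by auto
qed

lemma acc_0: "acc 0 v = cycK r (set (K 0 v))"
  unfolding acc_def K_def by (simp add: S_0 init0_def Let_def Kof_def accof_def)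

lemma gsend_expl: "gsend0 r (S t u) =
     (let x = u - 1; d = dd n; D = DD n; T0 = (r-1) div 2 in
      if \<not> acc t u \<or> t < T0 then [] else
      if t - T0 < D then (if d^(t - T0) dvd x then [(d^(t - T0 + 1) * (x div d^(t - T0 + 1)) + 1, [])] else [])
      else if t - T0 < 2*D then
        (if d^(2*D - 1 - (t - T0) + 1) dvd x then map (\<lambda>i. (x + i*d^(2*D - 1 - (t - T0)) + 1, [])) [1..<d] else [])
      else [])"
  by (subst shape) (simp add: gsend0_def)

lemma msg_nil: "(w, m) \<in> set (gsend0 r (S t u)) \<Longrightarrow> m = []"
  unfolding gsend_expl Let_def by (auto split: if_splits)

lemma gsend_len: "length (gsend0 r (S t u)) \<le> dd n"
  unfolding gsend_expl Let_def using dd_pos[of n] by (auto split: if_splits)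

lemma SE_fin: "finite (SE t v)"
proof -
  have "SE t v \<subseteq> (\<lambda>u. (u, [])) ` {1..n}" unfolding SE_def using msg_nil by auto
  then show ?thesis using finite_surj by blast
qed

lemma SE_card: "card (SE t v) \<le> dd n"
proof -
  let ?U = "{u \<in> {1..n}. (v, []) \<in> set (gsend0 r (S t u))}"
  have sub: "SE t v \<subseteq> (\<lambda>u. (u, [])) ` ?U" unfolding SE_def using msg_nil by fastforce
  have finU: "finite ?U" by simp
  have c1: "card (SE t v) \<le> card ?U"
    using card_mono[OF finite_imageI[OF finU] sub] card_image_le[OF finU, of "\<lambda>u. (u, [])"] by (rule le_trans)
  define d where "d = dd n"
  define D where "D = DD n"
  define T0 where "T0 = (r - 1) div 2"
  have d0: "d > 0" using dd_pos[of n] unfolding d_def by simp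
  have "card ?U \<le> d"
  proof (cases "t < T0 \<or> 2 * D \<le> t - T0")
    case True
    then have "?U = {}" unfolding gsend_expl Let_def d_def D_def T0_def by auto
    then show ?thesis by (metis card.empty le0)
  next
    case False
    show ?thesis
    proof (cases "t - T0 < D")
      case True
      define g where "g = t - T0"
      have "?U \<subseteq> (\<lambda>i. (v - 1) + i * d^g + 1) ` {..<d}"
      proof
        fix u assume u: "u \<in> ?U"
        then have dv: "d^g dvd (u - 1)" and vv: "v = d^(g+1) * ((u - 1) div d^(g+1)) + 1"
          using False True unfolding gsend_expl Let_def d_def D_def T0_def g_def
          by (auto split: if_splits)
        have "u - 1 = (v - 1) + ((u - 1) div d^g mod d) * d^g"
          using A1[OF d0 dv] vv by simp
        moreover have "u \<ge> 1" using u by simp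
        ultimately have "u = (v - 1) + ((u - 1) div d^g mod d) * d^g + 1" by linarith
        moreover have "(u - 1) div d^g mod d < d" using d0 by simp
        ultimately show "u \<in> (\<lambda>i. (v - 1) + i * d^g + 1) ` {..<d}" by blast
      qed
      then have "card ?U \<le> card ((\<lambda>i. (v - 1) + i * d^g + 1) ` {..<d})"
        by (intro card_mono) auto
      also have "\<dots> \<le> d" using card_image_le[of "{..<d}"] by (metis card_lessThan finite_lessThan)
      finally show ?thesis .
    next
      case True2: False
      define e where "e = 2 * D - 1 - (t - T0)"
      have "?U \<subseteq> {d^(e+1) * ((v - 1) div d^(e+1)) + 1}"
      proof
        fix u assume u: "u \<in> ?U"
        then obtain i where dv: "d^(e+1) dvd (u - 1)" and vv: "v = (u - 1) + i * d^e + 1"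
          and i: "i < d"
          using False True2 unfolding gsend_expl Let_def d_def D_def T0_def e_def
          by (auto split: if_splits)
        have "(v - 1) div d^(e+1) = (u - 1) div d^(e+1)" using A2[OF d0 dv i] vv by simp
        moreover have "u - 1 = d^(e+1) * ((u - 1) div d^(e+1))" using dv by simp
        moreover have "u \<ge> 1" using u by simp
        ultimately show "u \<in> {d^(e+1) * ((v - 1) div d^(e+1)) + 1}" by simp
      qed
      then have "card ?U \<le> card {d^(e+1) * ((v - 1) div d^(e+1)) + 1}" by (intro card_mono) simp_all
      then have "card ?U \<le> 1" by simp
      then show ?thesis using d0 by linarith
    qed
  qed
  then show ?thesis using c1 unfolding d_def by linarith
qed

lemma adv_SE: "adv t v (SE t v) = SE t v"
  using va SE_fin SE_card unfolding valid_adv_def by blast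

lemma acc_Suc': "acc (Suc t) v = (acc t v \<or> cycK r (set (K (Suc t) v)) \<or> SE t v \<noteq> {})"
  using acc_Suc adv_SE by simp


primrec reach :: "nat \<Rightarrow> nat \<Rightarrow> nat set" where
  "reach 0 v = {v}"
| "reach (Suc t) v = reach t v \<union> {a. \<exists>u. E u v \<and> a \<in> reach t u}"

lemma reach_Suc_mono: "reach t v \<subseteq> reach (Suc t) v" by auto

lemma reach_mono: "t \<le> t' \<Longrightarrow> reach t v \<subseteq> reach t' v"
proof (induction t' )
  case 0 then show ?case by simp
next
  case (Suc t') then show ?case using reach_Suc_mono[of t' v] by (cases "t = Suc t'") auto
qed

lemma reach_self: "v \<in> reach t v"
  using reach_mono[of 0 t v] by auto

lemma reach_trans: "a \<in> reach k b \<Longrightarrow> b \<in> reach m c \<Longrightarrow> a \<in> reach (k + m) c"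
proof (induction m arbitrary: c)
  case 0 then show ?case by simp
next
  case (Suc m)
  from Suc.prems(2) have "b \<in> reach m c \<or> (\<exists>u. E u c \<and> b \<in> reach m u)" by simp
  then show ?case
  proof
    assume "b \<in> reach m c"
    then show ?thesis using Suc.IH[OF Suc.prems(1)] reach_Suc_mono[of "k+m" c] by auto
  next
    assume "\<exists>u. E u c \<and> b \<in> reach m u"
    then obtain u where "E u c" "b \<in> reach m u" by blast
    then show ?thesis using Suc.IH[OF Suc.prems(1)] by auto
  qed
qed

lemma reach_one: "E u c \<Longrightarrow> u \<in> reach 1 c" by simp

lemma K_char: "set (K t v) = {(a, b). E a b \<and> (a \<in> reach t v \<or> b \<in> reach t v)}"
proof (induction t arbitrary: v)
  case 0 then show ?case by (simp add: K_0)
next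
  case (Suc t)
  show ?case unfolding K_Suc Suc by auto
qed

lemma K_sound: "(a, b) \<in> set (K t v) \<Longrightarrow> E a b" using K_char by auto

lemma cycK_sound: "(\<forall>(a, b)\<in>R. E a b) \<Longrightarrow> cycK r R \<Longrightarrow> has_cycle n E r"
proof -
  assume R: "\<forall>(a, b)\<in>R. E a b" and c: "cycK r R"
  then obtain vs where vs: "length vs = r" "3 \<le> r" "distinct vs" "\<forall>i<r. (vs!i, vs!((i+1) mod r)) \<in> R"
    unfolding cycK_def by blast
  have "\<forall>i<r. E (vs!i) (vs!((i+1) mod r))" using vs(4) R by blast
  moreover have "set vs \<subseteq> {1..n}"
  proof
    fix x assume "x \<in> set vs"
    then obtain i where "i < r" "x = vs!i" using vs(1) by (metis in_set_conv_nth)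
    then show "x \<in> {1..n}" using Erange \<open>\<forall>i<r. E (vs!i) (vs!((i+1) mod r))\<close> by blast
  qed
  ultimately show ?thesis using vs unfolding has_cycle_def by blast
qed

lemma cycK_K: "cycK r (set (K t v)) \<Longrightarrow> has_cycle n E r"
  by (erule cycK_sound[rotated]) (auto dest: K_sound)

lemma acc_sound: "acc t v \<Longrightarrow> has_cycle n E r"
proof (induction t arbitrary: v)
  case 0 then show ?case using cycK_K by (auto simp: acc_0)
next
  case (Suc t)
  then have "acc t v \<or> cycK r (set (K (Suc t) v)) \<or> SE t v \<noteq> {}" by (simp add: acc_Suc')
  then show ?case
  proof (elim disjE)
    assume "acc t v" then show ?thesis by (rule Suc.IH)
  next
    assume "cycK r (set (K (Suc t) v))" then show ?thesis using cycK_K by blast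
  next
    assume "SE t v \<noteq> {}"
    then obtain u m where "(v, m) \<in> set (gsend0 r (S t u))" unfolding SE_def by auto
    then have "acc t u" unfolding gsend_expl Let_def by (auto split: if_splits)
    then show ?thesis by (rule Suc.IH)
  qed
qed

lemma acc_cyc: "cycK r (set (K t v)) \<Longrightarrow> acc t v"
  by (cases t) (simp_all add: acc_0 acc_Suc')

lemma acc_mono: "acc t v \<Longrightarrow> acc (t + m) v"
  by (induction m) (simp_all add: acc_Suc')

lemma recv: "acc t (x+1) \<Longrightarrow> x < n \<Longrightarrow> (w, []) \<in> set (gsend0 r (S t (x+1))) \<Longrightarrow> acc (Suc t) w"
proof -
  assume "x < n" "(w, []) \<in> set (gsend0 r (S t (x+1)))"
  then have "(x+1, []) \<in> SE t w" unfolding SE_def by simp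
  then show ?thesis by (auto simp: acc_Suc')
qed

lemma cycle_complete:
  assumes "has_cycle n E r"
  shows "\<exists>w\<in>{1..n}. acc ((r - 1) div 2) w"
proof -
  define T0 where "T0 = (r - 1) div 2"
  obtain vs where vs: "length vs = r" "3 \<le> r" "distinct vs" "set vs \<subseteq> {1..n}"
    and ed: "\<forall>i<r. E (vs ! i) (vs ! ((i + 1) mod r))"
    using assms unfolding has_cycle_def by blast
  define w where "w = vs ! 0"
  have wn: "w \<in> {1..n}" using vs unfolding w_def by (metis in_set_conv_nth less_le_trans subsetD zero_less_numeral)
  have fwd: "j < r \<Longrightarrow> vs ! j \<in> reach j w" for j
  proof (induction j)
    case 0 then show ?case by (simp add: w_def)
  next
    case (Suc j)
    have "E (vs ! j) (vs ! (Suc j))" using ed[rule_format, of j] Suc.prems by simp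
    then have "vs ! Suc j \<in> reach 1 (vs ! j)" using Esym by simp
    from reach_trans[OF this Suc.IH] Suc.prems show ?case by simp
  qed
  have bwd: "1 \<le> m \<Longrightarrow> m < r \<Longrightarrow> vs ! (r - m) \<in> reach m w" for m
  proof (induction m)
    case 0 then show ?case by simp
  next
    case (Suc m)
    show ?case
    proof (cases "m = 0")
      case True
      have "E (vs ! (r - 1)) (vs ! 0)" using ed[rule_format, of "r - 1"] vs(2) by simp
      then show ?thesis using True by (simp add: w_def)
    next
      case False
      have "(r - Suc m + 1) mod r = r - m" using Suc.prems False by simp
      then have "E (vs ! (r - Suc m)) (vs ! (r - m))" using ed[rule_format, of "r - Suc m"] Suc.prems by simp
      then have "vs ! (r - Suc m) \<in> reach 1 (vs ! (r - m))" by simp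
      from reach_trans[OF this Suc.IH] Suc.prems False show ?thesis by simp
    qed
  qed
  have "\<forall>i<r. (vs!i, vs!((i+1) mod r)) \<in> set (K T0 w)"
  proof (intro allI impI)
    fix i assume i: "i < r"
    have "vs ! i \<in> reach T0 w \<or> vs ! ((i+1) mod r) \<in> reach T0 w"
    proof (cases "i \<le> T0")
      case True then show ?thesis using fwd[OF i] reach_mono[OF True] by blast
    next
      case False
      show ?thesis
      proof (cases "i = r - 1")
        case True
        then have "(i+1) mod r = 0" using i by simp
        then show ?thesis using reach_self[of w T0] by (simp add: w_def)
      next
        case False2: False
        then have m: "(i+1) mod r = i + 1" "i + 1 = r - (r - (i+1))" using i by simp_all
        have "vs ! (r - (r - (i+1))) \<in> reach (r - (i+1)) w" using bwd[of "r - (i+1)"] i False2 by simp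
        moreover have "r - (i+1) \<le> T0" using False unfolding T0_def by simp
        ultimately show ?thesis using m reach_mono by fastforce
      qed
    qed
    then show "(vs!i, vs!((i+1) mod r)) \<in> set (K T0 w)" using K_char ed i by auto
  qed
  then have "cycK r (set (K T0 w))" unfolding cycK_def using vs by blast
  then show ?thesis using acc_cyc wn unfolding T0_def by blast
qed


lemma up:
  fixes g x y :: nat
  assumes "g \<le> DD n" "x < n" "dd n ^ g dvd x" "y < n" "y div dd n ^ g = x div dd n ^ g"
    "acc ((r - 1) div 2) (y + 1)"
  shows "acc ((r - 1) div 2 + g) (x + 1)"
  using assms
proof (induction g arbitrary: x)
  case 0 then show ?case by simp
next
  case (Suc g)
  define d where "d = dd n"
  define T0 where "T0 = (r - 1) div 2"
  have d0: "d > 0" using dd_pos[of n] unfolding d_def by simp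
  define x' where "x' = d^g * (y div d^g)"
  have x'y: "x' \<le> y" unfolding x'_def by (simp add: times_div_less_eq_dividend)
  have dvx': "d^g dvd x'" unfolding x'_def by simp
  have x'div: "x' div d^g = y div d^g" unfolding x'_def using d0 by simp
  have IH: "acc (T0 + g) (x' + 1)"
    using Suc.IH[of x'] Suc.prems x'y dvx' x'div unfolding d_def T0_def by simp
  have q1: "x' div d^(g+1) = y div d^(g+1)"
  proof -
    have "x' div d^(g+1) = (d^g * (y div d^g)) div (d^g * d)" unfolding x'_def by (simp add: mult.commute)
    also have "\<dots> = (y div d^g) div d" using d0 by (simp add: div_mult_mult1)
    also have "\<dots> = y div (d^g * d)" by (rule div_mult2_eq[symmetric])
    finally show ?thesis by (simp add: mult.commute)
  qed
  have xe: "x = d^(g+1) * (x div d^(g+1))" using Suc.prems(3) unfolding d_def by simp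
  have tgt: "d^(g+1) * (x' div d^(g+1)) = x" using q1 xe Suc.prems(5) unfolding d_def by simp
  have "gsend0 r (S (T0 + g) (x' + 1)) = [(d^(g+1) * (x' div d^(g+1)) + 1, [])]"
    unfolding gsend_expl Let_def using IH Suc.prems(1) dvx' unfolding d_def T0_def by simp
  then have "(x + 1, []) \<in> set (gsend0 r (S (T0 + g) (x' + 1)))" using tgt by simp
  from recv[OF IH _ this] x'y Suc.prems(4) show ?case unfolding T0_def by simp
qed

lemma down:
  fixes k y :: nat
  assumes root: "acc ((r - 1) div 2 + DD n) 1"
  shows "k \<le> DD n \<Longrightarrow> y < n \<Longrightarrow> dd n ^ (DD n - k) dvd y \<Longrightarrow> acc ((r - 1) div 2 + DD n + k) (y + 1)"
proof (induction k arbitrary: y)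
  case 0
  have "y = 0"
  proof (rule ccontr)
    assume "y \<noteq> 0"
    then have "dd n ^ DD n \<le> y" using 0 by (simp add: dvd_imp_le)
    then show False using dd_DD[of n] 0 by simp
  qed
  then show ?case using root by simp
next
  case (Suc k)
  define d where "d = dd n"
  define D where "D = DD n"
  define T0 where "T0 = (r - 1) div 2"
  define e where "e = D - Suc k"
  have d0: "d > 0" using dd_pos[of n] unfolding d_def by simp
  have De: "D - k = e + 1" using Suc.prems(1) unfolding e_def D_def by simp
  define x where "x = d^(e+1) * (y div d^(e+1))"
  have xy: "x \<le> y" unfolding x_def by (simp add: times_div_less_eq_dividend)
  have dvx: "d^(D - k) dvd x" unfolding x_def De by simp
  have IH: "acc (T0 + D + k) (x + 1)"
    using Suc.IH[of x] Suc.prems xy dvx unfolding d_def T0_def D_def by simp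
  define i where "i = (y div d^e) mod d"
  have dvy: "d^e dvd y" using Suc.prems(3) unfolding e_def d_def D_def by simp
  have yx: "y = x + i * d^e" using A1[OF d0 dvy] unfolding x_def i_def by simp
  show ?case
  proof (cases "i = 0")
    case True
    then have "y = x" using yx by simp
    then show ?thesis using acc_mono[OF IH, of 1] unfolding T0_def D_def by simp
  next
    case False
    have il: "i < d" unfolding i_def using d0 by simp
    have k: "k < D" using Suc.prems(1) unfolding D_def by simp
    have t1: "\<not> (T0 + D + k - T0 < D)" "T0 + D + k - T0 < 2 * D" using k by simp_all
    have t2: "2 * D - 1 - (T0 + D + k - T0) = e" using k unfolding e_def by simp
    have dvx2: "d^(e+1) dvd x" unfolding x_def by simp
    have "gsend0 r (S (T0 + D + k) (x + 1)) = map (\<lambda>i. (x + i*d^e + 1, [])) [1..<d]"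
      unfolding gsend_expl Let_def using IH t1 t2 dvx2 unfolding d_def T0_def D_def by simp
    moreover have "i \<in> set [1..<d]" using False il by simp
    ultimately have "(y + 1, []) \<in> set (gsend0 r (S (T0 + D + k) (x + 1)))" using yx by auto
    from recv[OF IH _ this] xy Suc.prems(2) show ?thesis unfolding T0_def D_def by simp
  qed
qed

lemma final: "v \<in> {1..n} \<Longrightarrow> acc ((r - 1) div 2 + 2 * DD n) v = has_cycle n E r"
proof
  assume "acc ((r - 1) div 2 + 2 * DD n) v" then show "has_cycle n E r" by (rule acc_sound)
next
  assume v: "v \<in> {1..n}" and h: "has_cycle n E r"
  obtain w where w: "w \<in> {1..n}" "acc ((r - 1) div 2) w" using cycle_complete[OF h] by blast
  have wl: "w - 1 < n" "w - 1 + 1 = w" using w(1) by auto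
  have "w - 1 < dd n ^ DD n" using wl dd_DD[of n] by linarith
  then have "(w - 1) div dd n ^ DD n = 0 div dd n ^ DD n" by simp
  then have root: "acc ((r - 1) div 2 + DD n) 1"
    using up[of "DD n" 0 "w - 1"] wl w v by auto
  have "acc ((r - 1) div 2 + DD n + DD n) (v - 1 + 1)"
    using down[OF root, of "DD n" "v - 1"] v by auto
  then show "acc ((r - 1) div 2 + 2 * DD n) v" using v by (simp add: mult_2 add.assoc)
qed

end


theorem proposition35:
  shows "\<exists>(c::nat) (f::nat \<Rightarrow> nat).
     (\<lambda>n. real (f n)) \<in> O(\<lambda>n. ln (real n) / ln (ln (real n))) \<and>
     (\<forall>r::nat. \<exists>A::hybrid_alg. \<forall>n E adv.
        simple_graph n E \<longrightarrow> valid_adv (cap c n) adv \<longrightarrow>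
          (\<forall>t. \<forall>u\<in>{1..n}.
              length (a_gsend A (run A n E adv t u)) \<le> cap c n \<and>
              (\<forall>(w, m) \<in> set (a_gsend A (run A n E adv t u)). length m \<le> cap c n)) \<and>
          (\<forall>v\<in>{1..n}.
              a_out A (run A n E adv ((r - 1) div 2 + f n) v) = Some (has_cycle n E r)))"
proof (rule exI[of _ 1], rule exI[of _ "\<lambda>n. 2 * DD n"], intro conjI allI)
  show "(\<lambda>n. real (2 * DD n)) \<in> O(\<lambda>n. ln (real n) / ln (ln (real n)))" by (rule DD_bigo)
next
  fix r
  show "\<exists>A::hybrid_alg. \<forall>n E adv.
        simple_graph n E \<longrightarrow> valid_adv (cap 1 n) adv \<longrightarrow>
          (\<forall>t. \<forall>u\<in>{1..n}.
              length (a_gsend A (run A n E adv t u)) \<le> cap 1 n \<and>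
              (\<forall>(w, m) \<in> set (a_gsend A (run A n E adv t u)). length m \<le> cap 1 n)) \<and>
          (\<forall>v\<in>{1..n}.
              a_out A (run A n E adv ((r - 1) div 2 + 2 * DD n) v) = Some (has_cycle n E r))"
  proof (intro exI allI impI)
    fix n E adv
    assume sg: "simple_graph n E" and va: "valid_adv (cap 1 n) adv"
    interpret setting r n E adv using sg va[unfolded cap_dd] by unfold_locales
    have P1: "\<forall>t. \<forall>u\<in>{1..n}.
              length (a_gsend (alg r) (run (alg r) n E adv t u)) \<le> cap 1 n \<and>
              (\<forall>(w, m) \<in> set (a_gsend (alg r) (run (alg r) n E adv t u)). length m \<le> cap 1 n)"
      unfolding gsend_eq cap_dd using gsend_len msg_nil by fastforce
    have P2: "\<forall>v\<in>{1..n}.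
              a_out (alg r) (run (alg r) n E adv ((r - 1) div 2 + 2 * DD n) v) = Some (has_cycle n E r)"
      unfolding out_eq using final by simp
    show "(\<forall>t. \<forall>u\<in>{1..n}.
              length (a_gsend (alg r) (run (alg r) n E adv t u)) \<le> cap 1 n \<and>
              (\<forall>(w, m) \<in> set (a_gsend (alg r) (run (alg r) n E adv t u)). length m \<le> cap 1 n)) \<and>
          (\<forall>v\<in>{1..n}.
              a_out (alg r) (run (alg r) n E adv ((r - 1) div 2 + 2 * DD n) v) = Some (has_cycle n E r))"
      using P1 P2 by blast
  qed
qed

end
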